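(* With $R_n^{(\mathbf z)}$ and $W^{(\mathbf z)}$ as defined below, the entanglement witness $W^{(\mathbf z)}$ (equivalently, the positive map $R_n^{(\mathbf z)}$) is optimal if and only if $|z_{ij}|=1$ for all $i\ne j$.
   Context: Let $n\ge2$, $z_{ij}\in\mathbb{C}$ for $1\le i<j\le n$ with $|z_{ij}|\le1$, $z_{ji}=\overline{z_{ij}}$. $e_{ij}=|e_i\rangle\langle e_j|$ for the standard basis of $\mathbb{C}^n$. $R_n^{(\mathbf z)}:M_n(\mathbb{C})\to M_n(\mathbb{C})$ is the linear map with $R_n^{(\mathbf z)}(e_{ii})=\frac{1}{n-1}(\mathbb{I}_n-e_{ii})$ and $R_n^{(\mathbf z)}(e_{ij})=-\frac{z_{ij}}{n-1}e_{ij}$ for $i\ne j$ (it is a positive map), and $W^{(\mathbf z)}=\frac1n\sum_{i,j}e_{ij}\otimes R_n^{(\mathbf z)}(e_{ij})$. A Hermitian $W$ on $\mathbb{C}^n\otimes\mathbb{C}^n$ is an entanglement witness if $\langle x\otimes y|W|x\otimes y\rangle\ge0$ for all product vectors and $W$ is not positive semidefinite; it is optimal if for every nonzero positive semidefinite $Q$, $W-Q$ is not an entanglement witness. A positive map is called optimal if its Choi witness is optimal. *)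

theory Defs
  imports "HOL-Analysis.Analysis"
begin

text \<open>Matrices on C^n are indexed by a finite type 'n (n = CARD('n));
  matrices on C^n (x) C^n are indexed by the pair type 'n \<times> 'n, with
  (x \<otimes> y) at index (i,k) equal to x_i y_k.\<close>

type_synonym 'n cmat = "complex ^ 'n ^ 'n"

definition unit_mat :: "'n::finite \<Rightarrow> 'n \<Rightarrow> 'n cmat" where
  "unit_mat i j = (\<chi> k l. if k = i \<and> l = j then 1 else 0)"

definition tensor_vec :: "complex ^ 'n::finite \<Rightarrow> complex ^ 'm::finite \<Rightarrow> complex ^ ('n \<times> 'm)" where
  "tensor_vec x y = (\<chi> p. x $ fst p * y $ snd p)"

definition qform :: "complex ^ 'a::finite ^ 'a \<Rightarrow> complex ^ 'a \<Rightarrow> complex" where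
  "qform A v = (\<Sum>a\<in>UNIV. \<Sum>b\<in>UNIV. cnj (v $ a) * A $ a $ b * v $ b)"

definition hermitian_mat :: "complex ^ 'a::finite ^ 'a \<Rightarrow> bool" where
  "hermitian_mat A \<longleftrightarrow> (\<forall>a b. A $ a $ b = cnj (A $ b $ a))"

definition psd_mat :: "complex ^ 'a::finite ^ 'a \<Rightarrow> bool" where
  "psd_mat A \<longleftrightarrow> hermitian_mat A \<and> (\<forall>v. qform A v \<in> \<real> \<and> Re (qform A v) \<ge> 0)"

definition ent_witness :: "complex ^ ('n::finite \<times> 'n) ^ ('n \<times> 'n) \<Rightarrow> bool" where
  "ent_witness W \<longleftrightarrow> hermitian_mat W
     \<and> (\<forall>x y. Re (qform W (tensor_vec x y)) \<ge> 0)
     \<and> \<not> psd_mat W"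

definition optimal_witness :: "complex ^ ('n::finite \<times> 'n) ^ ('n \<times> 'n) \<Rightarrow> bool" where
  "optimal_witness W \<longleftrightarrow> ent_witness W
     \<and> (\<forall>Q. psd_mat Q \<and> Q \<noteq> 0 \<longrightarrow> \<not> ent_witness (W - Q))"

text \<open>The linear map R_n^(z), given by its values on the matrix units:
  R(e_ii) = (I - e_ii)/(n-1), R(e_ij) = -z_ij e_ij/(n-1) for i \<noteq> j.\<close>
definition R_map :: "('n::finite \<Rightarrow> 'n \<Rightarrow> complex) \<Rightarrow> 'n cmat \<Rightarrow> 'n cmat" where
  "R_map z X = (\<chi> k l. if k = l
      then ((\<Sum>i\<in>UNIV. X $ i $ i) - X $ k $ k) / (of_nat CARD('n) - 1)
      else - z k l * X $ k $ l / (of_nat CARD('n) - 1))"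

text \<open>Choi witness W^(z) = (1/n) \<Sum>_{i,j} e_ij \<otimes> R(e_ij).\<close>
definition W_z :: "('n::finite \<Rightarrow> 'n \<Rightarrow> complex) \<Rightarrow> complex ^ ('n \<times> 'n) ^ ('n \<times> 'n)" where
  "W_z z = (\<chi> p q. (R_map z (unit_mat (fst p) (fst q))) $ snd p $ snd q / of_nat CARD('n))"

end

theory Submission
  imports Defs
begin

lemma sum_pair_univ:
  "(\<Sum>a\<in>(UNIV::('a::finite\<times>'b::finite) set). f a) = (\<Sum>i\<in>UNIV. \<Sum>k\<in>UNIV. f (i,k))"
  by (subst UNIV_Times_UNIV[symmetric]) (simp add: sum.cartesian_product)

lemma sum2_delta:
  fixes f :: "'a::finite \<Rightarrow> 'b::finite \<Rightarrow> 'c::comm_monoid_add"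
  shows "(\<Sum>j\<in>UNIV. \<Sum>l\<in>UNIV. if i = j \<and> k = l then f j l else 0) = f i k"
proof -
  have "\<And>j. (\<Sum>l\<in>UNIV. if i = j \<and> k = l then f j l else 0) = (if i = j then f j k else 0)"
    by (auto simp: sum.delta)
  then show ?thesis by (simp add: sum.delta)
qed

lemma sum2_delta':
  fixes f :: "'a::finite \<Rightarrow> 'c::comm_monoid_add"
  shows "(\<Sum>k\<in>UNIV. if i = k then f k else 0) = f i"
  by (simp add: sum.delta)

lemma sum_mult_delta:
  fixes a :: "'c::comm_ring_1"
  shows "(\<Sum>l\<in>(UNIV::'a::finite set). a * (if j = l then b l else 0) * c l) = a * b j * c j"
proof -
  have "(\<Sum>l\<in>(UNIV::'a set). a * (if j = l then b l else 0) * c l) = (\<Sum>l\<in>UNIV. if j = l then a * b l * c l else 0)"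
    by (rule sum.cong) auto
  then show ?thesis by (simp add: sum2_delta')
qed

definition Mm :: "('n::finite \<Rightarrow> 'n \<Rightarrow> complex) \<Rightarrow> ('n \<Rightarrow> 'n \<Rightarrow> complex) \<Rightarrow> complex ^ ('n \<times> 'n) ^ ('n \<times> 'n)" where
 "Mm D z = (\<chi> p q. (if p = q \<and> fst p \<noteq> snd p then D (fst p) (snd p) else 0)
    + (if fst p = snd p \<and> fst q = snd q \<and> fst p \<noteq> fst q then - z (fst p) (fst q) else 0))"

lemma QF:
  "qform (Mm D z) (tensor_vec x y) =
    (\<Sum>i\<in>UNIV. \<Sum>k\<in>UNIV. if i \<noteq> k then D i k * (cnj (x$i * y$k) * (x$i * y$k)) else 0)
  - (\<Sum>i\<in>UNIV. \<Sum>j\<in>UNIV. if i \<noteq> j then z i j * (cnj (x$i * y$i) * (x$j * y$j)) else 0)"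
proof -
  have e: "qform (Mm D z) (tensor_vec x y) =
    (\<Sum>i\<in>UNIV. \<Sum>k\<in>UNIV. \<Sum>j\<in>UNIV. \<Sum>l\<in>UNIV.
       cnj (x $ i) * cnj (y $ k) * (if i = j \<and> k = l \<and> i \<noteq> k then D j l else 0) * (x $ j * y $ l))
   + (\<Sum>i\<in>UNIV. \<Sum>k\<in>UNIV. \<Sum>j\<in>UNIV. \<Sum>l\<in>UNIV.
       cnj (x $ i) * cnj (y $ k) * (if i = k \<and> j = l \<and> i \<noteq> j then - z k l else 0) * (x $ j * y $ l))"
    unfolding qform_def Mm_def tensor_vec_def
    by (simp add: sum_pair_univ distrib_left distrib_right sum.distrib cong: if_cong)
  have s1: "\<And>i k. (\<Sum>j\<in>UNIV. \<Sum>l\<in>UNIV.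
       cnj (x $ i) * cnj (y $ k) * (if i = j \<and> k = l \<and> i \<noteq> k then D j l else 0) * (x $ j * y $ l))
     = (if i \<noteq> k then D i k * (cnj (x$i * y$k) * (x$i * y$k)) else 0)"
  proof -
    fix i k
    have "(\<Sum>j\<in>UNIV. \<Sum>l\<in>UNIV.
       cnj (x $ i) * cnj (y $ k) * (if i = j \<and> k = l \<and> i \<noteq> k then D j l else 0) * (x $ j * y $ l))
      = (\<Sum>j\<in>UNIV. \<Sum>l\<in>UNIV. if i = j \<and> k = l then
          (if i \<noteq> k then D j l * (cnj (x$i * y$k) * (x$j * y$l)) else 0) else 0)"
      by (intro sum.cong refl) auto
    also have "\<dots> = (if i \<noteq> k then D i k * (cnj (x$i * y$k) * (x$i * y$k)) else 0)"
      by (rule sum2_delta)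
    finally show "?thesis i k" .
  qed
  have s2: "\<And>i. (\<Sum>k\<in>UNIV. \<Sum>j\<in>UNIV. \<Sum>l\<in>UNIV.
       cnj (x $ i) * cnj (y $ k) * (if i = k \<and> j = l \<and> i \<noteq> j then - z k l else 0) * (x $ j * y $ l))
     = (\<Sum>j\<in>UNIV. if i \<noteq> j then - (z i j * (cnj (x$i * y$i) * (x$j * y$j))) else 0)"
  proof -
    fix i
    have "(\<Sum>k\<in>UNIV. \<Sum>j\<in>UNIV. \<Sum>l\<in>UNIV.
       cnj (x $ i) * cnj (y $ k) * (if i = k \<and> j = l \<and> i \<noteq> j then - z k l else 0) * (x $ j * y $ l))
      = (\<Sum>k\<in>UNIV. if i = k then (\<Sum>j\<in>UNIV. \<Sum>l\<in>UNIV. if j = l then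
          (if i \<noteq> j then - (z i j * (cnj (x$i * y$i) * (x$j * y$l)))  else 0) else 0) else 0)"
      proof (intro sum.cong refl)
        fix k assume "k \<in> (UNIV::'a set)"
        show "(\<Sum>j\<in>UNIV. \<Sum>l\<in>UNIV.
          cnj (x $ i) * cnj (y $ k) * (if i = k \<and> j = l \<and> i \<noteq> j then - z k l else 0) * (x $ j * y $ l))
          = (if i = k then (\<Sum>j\<in>UNIV. \<Sum>l\<in>UNIV. if j = l then
          (if i \<noteq> j then - (z i j * (cnj (x$i * y$i) * (x$j * y$l)))  else 0) else 0) else 0)"
          by (cases "i = k") (auto intro!: sum.cong simp: sum_mult_delta)
      qed
    also have "\<dots> = (\<Sum>j\<in>UNIV. if i \<noteq> j then - (z i j * (cnj (x$i * y$i) * (x$j * y$j))) else 0)"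
      by (simp only: sum2_delta' sum2_delta)
    finally show "?thesis i" .
  qed
  show ?thesis unfolding e s1 s2
    by (simp add: sum_negf[symmetric] if_distrib cong: if_cong)
qed

lemma amgm_w:
  fixes a b t A B :: real
  assumes "a \<ge> 0" "b \<ge> 0" "t \<ge> 0" "t^2 \<le> a * b"
  shows "2 * t * A * B \<le> a * A^2 + b * B^2"
proof (cases "a = 0")
  case True
  then have "t^2 \<le> 0" using assms by simp
  then have "t^2 = 0" by (simp add: antisym)
  then have "t = 0" by simp
  then show ?thesis using True assms by simp
next
  case False
  then have ap: "a > 0" using assms by simp
  have "t^2 * B^2 \<le> a * b * B^2" using assms by (simp add: mult_right_mono)
  then have "a * (a * A^2 + b * B^2 - 2 * t * A * B) \<ge> (a*A - t*B)^2"
    by (simp add: power2_eq_square algebra_simps)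
  moreover have "(a*A - t*B)^2 \<ge> 0" by simp
  ultimately have "a * (a * A^2 + b * B^2 - 2 * t * A * B) \<ge> 0" by linarith
  then show ?thesis using ap by (simp add: zero_le_mult_iff)
qed

lemma pair_bound:
  fixes zz :: complex and xi yi xj yj :: complex and a b :: real
  assumes "a \<ge> 0" "b \<ge> 0" "(cmod zz)^2 \<le> a * b"
  shows "Re (zz * (cnj (xi * yi) * (xj * yj))) \<le> (a * (cmod (xi*yj))^2 + b * (cmod (xj*yi))^2) / 2"
proof -
  have "Re (zz * (cnj (xi * yi) * (xj * yj))) \<le> cmod (zz * (cnj (xi * yi) * (xj * yj)))"
    by (rule complex_Re_le_cmod)
  also have "\<dots> = cmod zz * cmod (xi*yj) * cmod (xj*yi)"
    by (simp add: norm_mult)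
  also have "\<dots> \<le> (a * (cmod (xi*yj))^2 + b * (cmod (xj*yi))^2) / 2"
    using amgm_w[OF assms(1,2) norm_ge_zero assms(3), of "cmod (xi*yj)" "cmod (xj*yi)"] by simp
  finally show ?thesis .
qed

lemma cnj_mult_self: "cnj w * w = complex_of_real ((cmod w)^2)"
  by (metis complex_norm_square mult.commute of_real_power)

lemma BP:
  fixes D z :: "'n::finite \<Rightarrow> 'n \<Rightarrow> complex" and d :: "'n \<Rightarrow> 'n \<Rightarrow> real"
  assumes dD: "\<And>i k. i \<noteq> k \<Longrightarrow> D i k = complex_of_real (d i k)"
    and dpos: "\<And>i k. i \<noteq> k \<Longrightarrow> d i k \<ge> 0"
    and zb: "\<And>i j. i \<noteq> j \<Longrightarrow> (cmod (z i j))^2 \<le> d i j * d j i"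
  shows "Re (qform (Mm D z) (tensor_vec x y)) \<ge> 0"
proof -
  define F where "F i k = (if i \<noteq> k then d i k * (cmod (x$i * y$k))^2 else 0)" for i k
  define G where "G i j = (if i \<noteq> j then Re (z i j * (cnj (x$i * y$i) * (x$j * y$j))) else 0)" for i j
  have r1: "Re (\<Sum>i\<in>UNIV. \<Sum>k\<in>UNIV. if i \<noteq> k then D i k * (cnj (x$i * y$k) * (x$i * y$k)) else 0)
     = (\<Sum>i\<in>UNIV. \<Sum>k\<in>UNIV. F i k)"
    unfolding F_def Re_sum
    by (intro sum.cong refl) (auto simp: dD cnj_mult_self simp del: complex_cnj_mult)
  have r2: "Re (\<Sum>i\<in>UNIV. \<Sum>j\<in>UNIV. if i \<noteq> j then z i j * (cnj (x$i * y$i) * (x$j * y$j)) else 0)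
     = (\<Sum>i\<in>UNIV. \<Sum>j\<in>UNIV. G i j)"
    unfolding G_def Re_sum by (intro sum.cong refl) auto
  have pb: "G i j \<le> (F i j + F j i) / 2" for i j
    unfolding G_def F_def
    using pair_bound[where a="d i j" and b="d j i" and zz="z i j" and xi="x$i" and yi="y$i"
        and xj="x$j" and yj="y$j"] dpos[of i j] dpos[of j i] zb[of i j] by auto
  have "(\<Sum>i\<in>UNIV. \<Sum>j\<in>UNIV. G i j) \<le> (\<Sum>i\<in>UNIV. \<Sum>j\<in>UNIV. (F i j + F j i) / 2)"
    by (intro sum_mono pb)
  also have "\<dots> = ((\<Sum>i\<in>UNIV. \<Sum>j\<in>UNIV. F i j) + (\<Sum>i\<in>UNIV. \<Sum>j\<in>UNIV. F j i)) / 2"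
    by (simp add: sum.distrib sum_divide_distrib[symmetric])
  also have "\<dots> = (\<Sum>i\<in>UNIV. \<Sum>j\<in>UNIV. F i j)"
    by (subst (2) sum.swap) simp
  finally show ?thesis unfolding QF using r1 r2 by simp
qed

lemma sum_two:
  fixes g :: "'a::finite \<Rightarrow> 'c::comm_monoid_add"
  assumes "p \<noteq> q" "\<And>i. i \<noteq> p \<Longrightarrow> i \<noteq> q \<Longrightarrow> g i = 0"
  shows "sum g UNIV = g p + g q"
proof -
  have "sum g UNIV = sum g {p,q}"
    by (rule sum.mono_neutral_right) (use assms in auto)
  then show ?thesis using assms by simp
qed

lemma qform_two:
  assumes "P \<noteq> R" "\<And>a. a \<noteq> P \<Longrightarrow> a \<noteq> R \<Longrightarrow> v $ a = 0"
  shows "qform A v = cnj (v$P) * A$P$P * v$P + cnj (v$P) * A$P$R * v$R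
     + cnj (v$R) * A$R$P * v$P + cnj (v$R) * A$R$R * v$R"
proof -
  have i: "(\<Sum>b\<in>UNIV. cnj (v $ a) * A $ a $ b * v $ b) = cnj (v $ a) * A $ a $ P * v $ P + cnj (v $ a) * A $ a $ R * v $ R" for a
    by (rule sum_two) (use assms in auto)
  show ?thesis unfolding qform_def i
    by (subst sum_two[OF assms(1)]) (use assms in \<open>auto simp: algebra_simps\<close>)
qed

definition scal :: "complex ^ 'a ^ 'a \<Rightarrow> complex \<Rightarrow> complex ^ 'a ^ 'a" where
  "scal A c = (\<chi> p q. A $ p $ q / c)"

lemma qform_scal: "qform (scal A c) v = qform A v / c"
  unfolding qform_def scal_def by (simp add: sum_divide_distrib)

lemma qform_diff: "qform (A - B) v = qform A v - qform B v"
  unfolding qform_def by (simp add: algebra_simps sum_subtractf)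

lemma qform_add: "qform (A + B) v = qform A v + qform B v"
  unfolding qform_def by (simp add: algebra_simps sum.distrib)

lemma herm_diff:
  assumes "hermitian_mat A" "hermitian_mat B" shows "hermitian_mat (A - B)"
  unfolding hermitian_mat_def
proof (intro allI)
  fix a b
  have "A$a$b = cnj (A$b$a)" "B$a$b = cnj (B$b$a)" using assms unfolding hermitian_mat_def by blast+
  then show "(A - B)$a$b = cnj ((A - B)$b$a)" by simp
qed

lemma herm_add:
  assumes "hermitian_mat A" "hermitian_mat B" shows "hermitian_mat (A + B)"
  unfolding hermitian_mat_def
proof (intro allI)
  fix a b
  have "A$a$b = cnj (A$b$a)" "B$a$b = cnj (B$b$a)" using assms unfolding hermitian_mat_def by blast+
  then show "(A + B)$a$b = cnj ((A + B)$b$a)" by simp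
qed

lemma psd_add: "psd_mat A \<Longrightarrow> psd_mat B \<Longrightarrow> psd_mat (A + B)"
  unfolding psd_mat_def by (auto simp: herm_add qform_add)

lemma tr_unit: "(\<Sum>m\<in>UNIV. unit_mat i j $ m $ m) = (if i = j then 1 else (0::complex))"
proof (cases "i = j")
  case True
  then have "(\<Sum>m\<in>UNIV. unit_mat i j $ m $ m) = (\<Sum>m\<in>UNIV. if i = m then 1 else 0)"
    unfolding unit_mat_def by (intro sum.cong refl) auto
  then show ?thesis using True by simp
next
  case False
  then show ?thesis unfolding unit_mat_def by (simp, intro sum.neutral) auto
qed

lemma R_unit:
  fixes z :: "'n::finite \<Rightarrow> 'n \<Rightarrow> complex"
  shows "R_map z (unit_mat i j) $ k $ l = (if k = l then (if i = j \<and> k \<noteq> i then 1 else 0)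
     else if k = i \<and> l = j then - z k l else 0) / (of_nat CARD('n) - 1)"
proof (cases "k = l")
  case True
  then show ?thesis unfolding R_map_def tr_unit by (simp add: unit_mat_def, blast)
next
  case False
  then show ?thesis unfolding R_map_def by (simp add: unit_mat_def)
qed

lemma Mm_num:
  "(if k = l then (if i = j \<and> k \<noteq> i then 1 else 0)
     else if k = i \<and> l = j then - z k l else 0) = Mm (\<lambda>_ _. 1) z $ (i,k) $ (j,l)"
  unfolding Mm_def by (cases "k = l"; cases "i = j"; cases "k = i"; simp)

lemma W_eq:
  fixes z :: "'n::finite \<Rightarrow> 'n \<Rightarrow> complex"
  shows "W_z z = scal (Mm (\<lambda>_ _. 1) z) (complex_of_real (real CARD('n) * (real CARD('n) - 1)))"
proof -
  have c: "complex_of_real (real CARD('n) * (real CARD('n) - 1)) = (of_nat CARD('n) - 1) * of_nat CARD('n)"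
    by simp
  have "W_z z $ (i,k) $ (j,l) = scal (Mm (\<lambda>_ _. 1) z) (complex_of_real (real CARD('n) * (real CARD('n) - 1))) $ (i,k) $ (j,l)"
    for i k j l
    unfolding W_z_def scal_def c by (simp only: vec_lambda_beta fst_conv snd_conv R_unit Mm_num divide_divide_eq_left)
  then show ?thesis by (simp add: vec_eq_iff)
qed

lemma herm_Mm:
  assumes "\<And>i k. i \<noteq> k \<Longrightarrow> cnj (D i k) = D i k"
    and "\<And>i j. i \<noteq> j \<Longrightarrow> z j i = cnj (z i j)"
  shows "hermitian_mat (Mm D z)"
  unfolding hermitian_mat_def
proof (intro allI)
  fix a b :: "'a \<times> 'a"
  have z: "fst a \<noteq> fst b \<Longrightarrow> z (fst a) (fst b) = cnj (z (fst b) (fst a))" using assms(2)[of "fst b" "fst a"] by simp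
  have d: "fst a \<noteq> snd a \<Longrightarrow> cnj (D (fst a) (snd a)) = D (fst a) (snd a)" using assms(1) by simp
  have e1: "(if a = b \<and> fst a \<noteq> snd a then D (fst a) (snd a) else 0)
     = cnj (if b = a \<and> fst b \<noteq> snd b then D (fst b) (snd b) else 0)"
  proof (cases "a = b \<and> fst a \<noteq> snd a")
    case True then show ?thesis using d by simp
  next
    case False then show ?thesis by auto
  qed
  have e2: "(if fst a = snd a \<and> fst b = snd b \<and> fst a \<noteq> fst b then - z (fst a) (fst b) else 0)
     = cnj (if fst b = snd b \<and> fst a = snd a \<and> fst b \<noteq> fst a then - z (fst b) (fst a) else 0)"
  proof (cases "fst a = snd a \<and> fst b = snd b \<and> fst a \<noteq> fst b")
    case True then show ?thesis using z by simp
  next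
    case False then show ?thesis by auto
  qed
  show "Mm D z $ a $ b = cnj (Mm D z $ b $ a)"
    unfolding Mm_def vec_lambda_beta using e1 e2 by simp
qed

lemma herm_scal: "hermitian_mat A \<Longrightarrow> cnj c = c \<Longrightarrow> hermitian_mat (scal A c)"
  unfolding hermitian_mat_def scal_def
proof (intro allI)
  fix a b
  assume h: "\<forall>a b. A $ a $ b = cnj (A $ b $ a)" and c: "cnj c = c"
  have "A $ a $ b = cnj (A $ b $ a)" using h by blast
  then show "(\<chi> p q. A $ p $ q / c) $ a $ b = cnj ((\<chi> p q. A $ p $ q / c) $ b $ a)" using c by simp
qed

lemma kernel:
  fixes Q :: "complex ^ 'a::finite ^ 'a"
  assumes psd: "psd_mat Q" and q0: "qform Q v = 0"
  shows "(\<Sum>b\<in>UNIV. Q$a$b * v$b) = 0"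
proof -
  have herm: "\<And>a b. Q$a$b = cnj (Q$b$a)" using psd unfolding psd_mat_def hermitian_mat_def by blast
  define u where "u = (\<chi> a. \<Sum>b\<in>UNIV. Q$a$b * v$b)"
  define T2 where "T2 = (\<Sum>a\<in>UNIV. \<Sum>b\<in>UNIV. cnj (v$a) * Q$a$b * u$b)"
  define T3 where "T3 = (\<Sum>a\<in>UNIV. \<Sum>b\<in>UNIV. cnj (u$a) * Q$a$b * v$b)"
  define S where "S = (\<Sum>a\<in>UNIV. (cmod (u$a))^2)"
  have T3: "T3 = complex_of_real S"
  proof -
    have "T3 = (\<Sum>a\<in>UNIV. cnj (u$a) * u$a)"
      unfolding T3_def u_def by (simp add: sum_distrib_left mult.assoc)
    also have "\<dots> = complex_of_real S" unfolding S_def by (simp add: cnj_mult_self)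
    finally show ?thesis .
  qed
  have T2: "T2 = complex_of_real S"
  proof -
    have "T2 = (\<Sum>b\<in>UNIV. \<Sum>a\<in>UNIV. cnj (v$a) * Q$a$b * u$b)"
      unfolding T2_def by (rule sum.swap)
    also have "\<dots> = (\<Sum>b\<in>UNIV. cnj (u$b) * u$b)"
    proof (rule sum.cong[OF refl])
      fix b
      have "(\<Sum>a\<in>UNIV. cnj (v$a) * Q$a$b * u$b) = (\<Sum>a\<in>UNIV. cnj (v$a) * Q$a$b) * u$b"
        by (simp add: sum_distrib_right)
      also have "(\<Sum>a\<in>UNIV. cnj (v$a) * Q$a$b) = cnj (u$b)"
      proof -
        have "(\<Sum>a\<in>UNIV. cnj (v$a) * Q$a$b) = (\<Sum>a\<in>UNIV. cnj (Q$b$a * v$a))"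
          by (intro sum.cong refl) (metis herm complex_cnj_mult mult.commute)
        also have "\<dots> = cnj (u$b)" unfolding u_def by simp
        finally show ?thesis .
      qed
      finally show "(\<Sum>a\<in>UNIV. cnj (v$a) * Q$a$b * u$b) = cnj (u$b) * u$b" .
    qed
    also have "\<dots> = complex_of_real S" unfolding S_def by (simp add: cnj_mult_self)
    finally show ?thesis .
  qed
  have Sge: "S \<ge> 0" unfolding S_def by (simp add: sum_nonneg)
  have expand: "qform Q (\<chi> a. v$a - complex_of_real r * u$a)
      = qform Q v - complex_of_real r * T2 - complex_of_real r * T3 + complex_of_real (r^2) * qform Q u" for r
    unfolding qform_def T2_def T3_def
    by (simp add: algebra_simps sum.distrib sum_subtractf sum_distrib_left power2_eq_square)
  define q where "q = Re (qform Q u)"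
  have qge: "q \<ge> 0" using psd unfolding psd_mat_def q_def by auto
  have ineq: "0 \<le> - 2 * r * S + r^2 * q" for r
  proof -
    have "0 \<le> Re (qform Q (\<chi> a. v$a - complex_of_real r * u$a))" using psd unfolding psd_mat_def by auto
    also have "\<dots> = - 2 * r * S + r^2 * q" unfolding expand q0 T2 T3 q_def by simp
    finally show ?thesis .
  qed
  have S0: "S = 0"
  proof (rule ccontr)
    assume "S \<noteq> 0"
    then have Sp: "S > 0" using Sge by simp
    define r where "r = S / (q + 1)"
    have rp: "r > 0" unfolding r_def using Sp qge by simp
    have "r * q < 2 * S"
    proof -
      have "r * q = S * (q / (q+1))" unfolding r_def by simp
      also have "\<dots> < S * 2" using Sp qge by (intro mult_strict_left_mono) (simp_all add: divide_simps)
      finally show ?thesis by simp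
    qed
    then have "r * (r * q) < r * (2 * S)" using rp by simp
    then have "- 2 * r * S + r^2 * q < 0" by (simp add: power2_eq_square algebra_simps)
    with ineq[of r] show False by simp
  qed
  then have "\<forall>a\<in>UNIV. (cmod (u$a))^2 = 0" unfolding S_def
    by (subst sum_nonneg_eq_0_iff[symmetric]) auto
  then have "u$a = 0" by simp
  then show ?thesis unfolding u_def by simp
qed

definition xv :: "'n::finite \<Rightarrow> 'n \<Rightarrow> complex \<Rightarrow> complex ^ 'n" where
  "xv p q s = (\<chi> i. if i = p then 1 else if i = q then s else 0)"

lemma QF2:
  assumes pq: "p \<noteq> q"
  shows "qform (Mm D z) (tensor_vec (xv p q s) (xv p q t)) =
     D p q * (cnj t * t) + D q p * (cnj s * s) - (z p q * (s * t) + z q p * (cnj s * cnj t))"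
proof -
  let ?x = "xv p q s" and ?y = "xv p q t"
  have xp: "?x$p = 1" "?x$q = s" "?y$p = 1" "?y$q = t" using pq by (simp_all add: xv_def)
  have x0: "\<And>i. i \<noteq> p \<Longrightarrow> i \<noteq> q \<Longrightarrow> ?x$i = 0 \<and> ?y$i = 0" by (simp add: xv_def)
  have a: "(\<Sum>k\<in>UNIV. if i \<noteq> k then D i k * (cnj (?x$i * ?y$k) * (?x$i * ?y$k)) else 0)
     = (if i \<noteq> p then D i p * (cnj (?x$i * ?y$p) * (?x$i * ?y$p)) else 0)
     + (if i \<noteq> q then D i q * (cnj (?x$i * ?y$q) * (?x$i * ?y$q)) else 0)" for i
    by (rule sum_two[OF pq]) (use x0 in auto)
  have b: "(\<Sum>j\<in>UNIV. if i \<noteq> j then z i j * (cnj (?x$i * ?y$i) * (?x$j * ?y$j)) else 0)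
     = (if i \<noteq> p then z i p * (cnj (?x$i * ?y$i) * (?x$p * ?y$p)) else 0)
     + (if i \<noteq> q then z i q * (cnj (?x$i * ?y$i) * (?x$q * ?y$q)) else 0)" for i
    by (rule sum_two[OF pq]) (use x0 in auto)
  define fa where "fa i = (if i \<noteq> p then D i p * (cnj (?x$i * ?y$p) * (?x$i * ?y$p)) else 0)
     + (if i \<noteq> q then D i q * (cnj (?x$i * ?y$q) * (?x$i * ?y$q)) else 0)" for i
  define fb where "fb i = (if i \<noteq> p then z i p * (cnj (?x$i * ?y$i) * (?x$p * ?y$p)) else 0)
     + (if i \<noteq> q then z i q * (cnj (?x$i * ?y$i) * (?x$q * ?y$q)) else 0)" for i
  have sa: "sum fa UNIV = fa p + fa q"
    by (rule sum_two[OF pq]) (simp add: fa_def x0)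
  have sb: "sum fb UNIV = fb p + fb q"
    by (rule sum_two[OF pq]) (simp add: fb_def x0)
  have "qform (Mm D z) (tensor_vec ?x ?y) = sum fa UNIV - sum fb UNIV"
    unfolding QF a b fa_def fb_def ..
  also have "\<dots> = fa p + fa q - (fb p + fb q)" unfolding sa sb ..
  also have "\<dots> = D p q * (cnj t * t) + D q p * (cnj s * s) - (z p q * (s * t) + z q p * (cnj s * cnj t))"
    unfolding fa_def fb_def using pq by (simp add: xp)
  finally show ?thesis .
qed

lemma Qv_two:
  assumes pq: "p \<noteq> q"
  shows "(\<Sum>b\<in>UNIV. Q$a$b * (tensor_vec (xv p q s) (xv p q t))$b) =
     Q$a$(p,p) + Q$a$(p,q) * t + Q$a$(q,p) * s + Q$a$(q,q) * (s * t)"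
proof -
  have x0: "\<And>i. i \<noteq> p \<Longrightarrow> i \<noteq> q \<Longrightarrow> (xv p q s)$i = 0 \<and> (xv p q t)$i = 0" by (simp add: xv_def)
  have i: "(\<Sum>k\<in>UNIV. Q$a$(i,k) * ((xv p q s)$i * (xv p q t)$k)) =
     Q$a$(i,p) * ((xv p q s)$i * (xv p q t)$p) + Q$a$(i,q) * ((xv p q s)$i * (xv p q t)$q)" for i
    by (rule sum_two[OF pq]) (use x0 in auto)
  show ?thesis
    unfolding sum_pair_univ tensor_vec_def
    apply (simp only: vec_lambda_beta fst_conv snd_conv i)
    apply (subst sum_two[OF pq])
     apply (simp add: x0)
    using pq by (simp add: xv_def algebra_simps)
qed

lemma zero_vec:
  assumes pq: "p \<noteq> q" and zz: "z p q * cnj (z p q) = 1" and zh: "z q p = cnj (z p q)"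
  shows "qform (Mm (\<lambda>_ _. 1) z) (tensor_vec (xv p q s) (xv p q (cnj (z p q * s)))) = 0"
proof -
  have "qform (Mm (\<lambda>_ _. 1) z) (tensor_vec (xv p q s) (xv p q (cnj (z p q * s))))
     = (1 - z p q * cnj (z p q)) * (s * cnj s)"
    unfolding QF2[OF pq] zh by (simp add: algebra_simps)
  then show ?thesis using zz by simp
qed

lemma cr_pos: "CARD('n::finite) \<ge> 2 \<Longrightarrow> real CARD('n) * (real CARD('n) - 1) > 0"
  by (simp add: mult_pos_pos)

lemma Re_div_real: "Re (w / complex_of_real r) = Re w / r"
  by (simp add: Re_divide_of_real)

lemma scal_bp:
  assumes "Re (qform A v) \<ge> 0" "r > 0"
  shows "Re (qform (scal A (complex_of_real r)) v) \<ge> 0"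
  unfolding qform_scal Re_div_real using assms by simp

lemma W_herm:
  fixes z :: "'n::finite \<Rightarrow> 'n \<Rightarrow> complex"
  assumes "\<And>i j. i \<noteq> j \<Longrightarrow> z j i = cnj (z i j)"
  shows "hermitian_mat (W_z z)"
  unfolding W_eq
  apply (rule herm_scal[OF herm_Mm])
    apply simp
   apply (erule assms)
  apply simp
  done

lemma W_bp:
  fixes z :: "'n::finite \<Rightarrow> 'n \<Rightarrow> complex"
  assumes "CARD('n) \<ge> 2" and "\<And>i j. i \<noteq> j \<Longrightarrow> cmod (z i j) \<le> 1"
  shows "Re (qform (W_z z) (tensor_vec x y)) \<ge> 0"
  unfolding W_eq
proof (rule scal_bp[OF BP cr_pos[OF assms(1)]])
  show "\<And>i k. i \<noteq> k \<Longrightarrow> (1::complex) = complex_of_real 1" by simp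
  show "\<And>i k. i \<noteq> k \<Longrightarrow> (0::real) \<le> 1" by simp
  show "\<And>i j. i \<noteq> j \<Longrightarrow> (cmod (z i j))\<^sup>2 \<le> 1 * 1"
    using assms(2) by (simp add: power_le_one)
qed

lemma exists_two: "CARD('n::finite) \<ge> 2 \<Longrightarrow> \<exists>q::'n. q \<noteq> p"
proof (rule ccontr)
  assume "CARD('n) \<ge> 2" "\<not> (\<exists>q::'n. q \<noteq> p)"
  then have "(UNIV::'n set) = {p}" by auto
  then have "card (UNIV::'n set) = card {p}" by (rule arg_cong)
  then have "CARD('n) = 1" by simp
  with \<open>CARD('n) \<ge> 2\<close> show False by simp
qed

lemma W_not_psd:
  fixes z :: "'n::finite \<Rightarrow> 'n \<Rightarrow> complex"
  assumes n2: "CARD('n) \<ge> 2" and pq: "p \<noteq> q" and zz: "z p q * cnj (z p q) = 1"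
    and zh: "z q p = cnj (z p q)"
  shows "\<not> psd_mat (W_z z)"
proof
  assume psd: "psd_mat (W_z z)"
  define v :: "complex ^ ('n \<times> 'n)" where
    "v = (\<chi> a. if a = (p,p) then 1 else if a = (q,q) then cnj (z p q) else 0)"
  have "qform (Mm (\<lambda>_ _. 1) z) v = - 2"
    apply (subst qform_two[where P="(p,p)" and R="(q,q)"])
    using pq apply (auto simp: v_def Mm_def zh)
    using zz by (simp add: algebra_simps)
  then have "Re (qform (W_z z) v) = - 2 / (real CARD('n) * (real CARD('n) - 1))"
    unfolding W_eq qform_scal Re_div_real by simp
  also have "\<dots> < 0" using cr_pos[OF n2] by (simp add: divide_neg_pos)
  finally show False using psd unfolding psd_mat_def by (meson not_le)
qed

lemma norm1_cnj: "cmod w = 1 \<Longrightarrow> w * cnj w = 1"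
  by (metis complex_norm_square of_real_1 power_one)

lemma opt_if:
  fixes z :: "'n::finite \<Rightarrow> 'n \<Rightarrow> complex" and Q :: "complex ^ ('n \<times> 'n) ^ ('n \<times> 'n)"
  assumes n2: "CARD('n) \<ge> 2"
    and zh: "\<And>i j. i \<noteq> j \<Longrightarrow> z j i = cnj (z i j)"
    and z1: "\<And>i j. i \<noteq> j \<Longrightarrow> cmod (z i j) = 1"
    and psdQ: "psd_mat Q" and ew: "ent_witness (W_z z - Q)"
  shows "Q = 0"
proof -
  have key: "(\<Sum>b\<in>UNIV. Q$a$b * (tensor_vec (xv p q s) (xv p q (cnj (z p q * s))))$b) = 0"
    if pq: "p \<noteq> q" for p q s a
  proof -
    let ?v = "tensor_vec (xv p q s) (xv p q (cnj (z p q * s)))"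
    have w0: "qform (W_z z) ?v = 0"
      unfolding W_eq qform_scal using zero_vec[OF pq norm1_cnj[OF z1[OF pq]] zh[OF pq]] by simp
    have "Re (qform (W_z z - Q) ?v) \<ge> 0" using ew unfolding ent_witness_def by blast
    then have le: "Re (qform Q ?v) \<le> 0" unfolding qform_diff w0 by simp
    have "qform Q ?v \<in> \<real>" "Re (qform Q ?v) \<ge> 0" using psdQ unfolding psd_mat_def by auto
    then have "qform Q ?v = 0" using le by (simp add: complex_is_Real_iff complex_eq_iff)
    then show ?thesis by (rule kernel[OF psdQ])
  qed
  have e: "Q$a$(p,p) + Q$a$(p,q) * cnj (z p q * s) + Q$a$(q,p) * s + Q$a$(q,q) * (s * cnj (z p q * s)) = 0"
    if pq: "p \<noteq> q" for p q s a
    using key[where p=p and q=q and s=s and a=a, OF pq] unfolding Qv_two[OF pq] .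
  have d0: "Q$a$(p,p) = 0" if pq: "p \<noteq> q" for p q a
    using e[where p=p and q=q and s=0 and a=a, OF pq] by simp
  have o0: "Q$a$(q,p) = 0" if pq: "p \<noteq> q" for p q a
  proof -
    have qq: "Q$a$(q,q) = 0" using d0[of q p a] pq by auto
    have e1: "Q$a$(p,q) * cnj (z p q) + Q$a$(q,p) = 0" using e[where p=p and q=q and s=1 and a=a, OF pq] d0[OF pq] qq by simp
    have e2: "Q$a$(p,q) * (- \<i> * cnj (z p q)) + Q$a$(q,p) * \<i> = 0"
      using e[where p=p and q=q and s="\<i>" and a=a, OF pq] d0[OF pq] qq by simp
    have "2 * Q$a$(q,p) = (Q$a$(p,q) * cnj (z p q) + Q$a$(q,p)) + (- \<i>) * (Q$a$(p,q) * (- \<i> * cnj (z p q)) + Q$a$(q,p) * \<i>)"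
      by (simp add: algebra_simps)
    then show ?thesis using e1 e2 by simp
  qed
  show "Q = 0"
  proof (simp add: vec_eq_iff, intro allI)
    fix a b :: "'n \<times> 'n"
    obtain i k where b: "b = (i,k)" by fastforce
    show "Q$a$b = 0"
    proof (cases "i = k")
      case True
      obtain q where "q \<noteq> i" using exists_two[OF n2] by blast
      then show ?thesis using d0[of i q a] b True by auto
    next
      case False
      then show ?thesis using o0[of k i a] b by auto
    qed
  qed
qed

lemma psd_onept:
  fixes P :: "'a::finite"
  assumes "e \<ge> 0"
  shows "psd_mat ((\<chi> a b. if a = P \<and> b = P then complex_of_real e else 0) :: complex ^ 'a ^ 'a)"
proof -
  let ?Q = "(\<chi> a b. if a = P \<and> b = P then complex_of_real e else 0) :: complex ^ 'a ^ 'a"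
  have "qform ?Q v = complex_of_real (e * (cmod (v$P))^2)" for v
  proof -
    have "qform ?Q v = (\<Sum>a\<in>UNIV. \<Sum>b\<in>UNIV. if P = a \<and> P = b then cnj (v$a) * complex_of_real e * v$b else 0)"
      unfolding qform_def by (intro sum.cong refl) auto
    also have "\<dots> = cnj (v$P) * complex_of_real e * v$P" by (rule sum2_delta)
    also have "\<dots> = complex_of_real e * (cnj (v$P) * v$P)" by (simp add: algebra_simps)
    finally show ?thesis by (simp add: cnj_mult_self)
  qed
  then show ?thesis using assms unfolding psd_mat_def hermitian_mat_def by auto
qed

lemma opt_nec:
  fixes z :: "'n::finite \<Rightarrow> 'n \<Rightarrow> complex"
  assumes n2: "CARD('n) \<ge> 2"
    and zb: "\<And>i j. i \<noteq> j \<Longrightarrow> cmod (z i j) \<le> 1"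
    and zh: "\<And>i j. i \<noteq> j \<Longrightarrow> z j i = cnj (z i j)"
    and pq: "p \<noteq> q" and lt: "cmod (z p q) < 1"
    and ewW: "ent_witness (W_z z)"
  shows "\<exists>Q. psd_mat Q \<and> Q \<noteq> 0 \<and> ent_witness (W_z z - Q)"
proof -
  define cr where "cr = real CARD('n) * (real CARD('n) - 1)"
  have crp: "cr > 0" unfolding cr_def using cr_pos[OF n2] .
  define eps where "eps = (1 - (cmod (z p q))^2) / cr"
  have epsp: "eps > 0" unfolding eps_def using crp lt
    by (simp add: power_less_one_iff abs_less_iff divide_pos_pos)
  define Q :: "complex ^ ('n \<times> 'n) ^ ('n \<times> 'n)" where
    "Q = (\<chi> a b. if a = (p,q) \<and> b = (p,q) then complex_of_real eps else 0)"
  define d where "d i k = (if i = p \<and> k = q then (cmod (z p q))^2 else 1)" for i k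
  have psdQ: "psd_mat Q" unfolding Q_def by (rule psd_onept) (use epsp in simp)
  have Qn0: "Q \<noteq> 0"
  proof
    assume "Q = 0"
    then have "Q $ (p,q) $ (p,q) = 0" by simp
    then show False unfolding Q_def using epsp by simp
  qed
  have WQ: "W_z z - Q = scal (Mm (\<lambda>i k. complex_of_real (d i k)) z) (complex_of_real cr)"
    unfolding W_eq cr_def[symmetric]
    unfolding vec_eq_iff scal_def Mm_def Q_def d_def eps_def
    using crp pq by (auto simp: field_simps)
  have hermWQ: "hermitian_mat (W_z z - Q)"
    unfolding WQ
    apply (rule herm_scal[OF herm_Mm])
      apply simp
     apply (erule zh)
    apply simp
    done
  have bpWQ: "Re (qform (W_z z - Q) (tensor_vec x y)) \<ge> 0" for x y
    unfolding WQ
  proof (rule scal_bp[OF BP crp])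
    show "\<And>i k. i \<noteq> k \<Longrightarrow> complex_of_real (d i k) = complex_of_real (d i k)" by simp
    show "\<And>i k. i \<noteq> k \<Longrightarrow> 0 \<le> d i k" unfolding d_def by simp
    show "\<And>i j. i \<noteq> j \<Longrightarrow> (cmod (z i j))\<^sup>2 \<le> d i j * d j i"
    proof -
      fix i j :: 'n assume ij: "i \<noteq> j"
      have c1: "(cmod (z i j))\<^sup>2 \<le> 1" using zb[OF ij] by (simp add: power_le_one)
      show "(cmod (z i j))\<^sup>2 \<le> d i j * d j i"
      proof (cases "i = p \<and> j = q")
        case True then show ?thesis using pq unfolding d_def by auto
      next
        case F1: False
        show ?thesis
        proof (cases "j = p \<and> i = q")
          case True
          then have "z i j = cnj (z p q)" using zh[OF pq] by simp
          then show ?thesis using pq True unfolding d_def by auto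
        next
          case False
          have "d i j = 1" "d j i = 1" using F1 False unfolding d_def by auto
          then show ?thesis using c1 by simp
        qed
      qed
    qed
  qed
  have npsd: "\<not> psd_mat (W_z z - Q)"
  proof
    assume "psd_mat (W_z z - Q)"
    then have "psd_mat (W_z z - Q + Q)" using psdQ by (rule psd_add)
    then show False using ewW unfolding ent_witness_def by simp
  qed
  show ?thesis
    using psdQ Qn0 hermWQ bpWQ npsd unfolding ent_witness_def by blast
qed

theorem mainTheorem4:
  fixes z :: "'n::finite \<Rightarrow> 'n \<Rightarrow> complex"
  assumes "CARD('n) \<ge> 2"
    and "\<And>i j. i \<noteq> j \<Longrightarrow> cmod (z i j) \<le> 1"
    and "\<And>i j. i \<noteq> j \<Longrightarrow> z j i = cnj (z i j)"
  shows "optimal_witness (W_z z) \<longleftrightarrow> (\<forall>i j. i \<noteq> j \<longrightarrow> cmod (z i j) = 1)"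
proof
  assume opt: "optimal_witness (W_z z)"
  show "\<forall>i j. i \<noteq> j \<longrightarrow> cmod (z i j) = 1"
  proof (intro allI impI, rule ccontr)
    fix i j :: 'n assume ij: "i \<noteq> j" and ne: "cmod (z i j) \<noteq> 1"
    then have lt: "cmod (z i j) < 1" using assms(2)[OF ij] by simp
    have ew: "ent_witness (W_z z)" using opt unfolding optimal_witness_def by simp
    obtain Q where "psd_mat Q" "Q \<noteq> 0" "ent_witness (W_z z - Q)"
      using opt_nec[OF assms(1) assms(2) assms(3) ij lt ew] by blast
    then show False using opt unfolding optimal_witness_def by blast
  qed
next
  assume z1: "\<forall>i j. i \<noteq> j \<longrightarrow> cmod (z i j) = 1"
  obtain p :: 'n where True by simp
  obtain q :: 'n where pq: "q \<noteq> p" using exists_two[OF assms(1)] by blast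
  have ew: "ent_witness (W_z z)"
    unfolding ent_witness_def
  proof (intro conjI allI)
    show "hermitian_mat (W_z z)" by (rule W_herm[OF assms(3)])
    show "\<And>x y. 0 \<le> Re (qform (W_z z) (tensor_vec x y))" by (rule W_bp[OF assms(1,2)])
    show "\<not> psd_mat (W_z z)"
      by (rule W_not_psd[OF assms(1) pq norm1_cnj assms(3)[OF pq]]) (use z1 pq in blast)
  qed
  show "optimal_witness (W_z z)"
    unfolding optimal_witness_def
  proof (intro conjI allI impI ew)
    fix Q :: "complex ^ ('n \<times> 'n) ^ ('n \<times> 'n)"
    assume h: "psd_mat Q \<and> Q \<noteq> 0"
    show "\<not> ent_witness (W_z z - Q)"
    proof
      assume ew': "ent_witness (W_z z - Q)"
      have "Q = 0" using opt_if[OF assms(1) assms(3) _ _ ew'] z1 h by blast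
      then show False using h by simp
    qed
  qed
qed

end
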